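(* Let $X\in\mathbb{R}^{N\times d}$, and let $(W_a,A_a)$, $(W_b,A_b)\in\mathbb{R}^{d\times m}\times\mathbb{R}^{m\times m}$. Let $\lambda_1:=\max\{\|W_a\|,\|W_b\|\}$, $\lambda_2:=\max\{\|A_a\|,\|A_b\|\}$ (assume $\lambda_2>0$), and choose $\gamma>0$ with $\gamma_0:=\gamma\lambda_2<1$. Then for $i\in\{a,b\}$ the equation $Z_i=\sigma(\gamma Z_iA_i+\sigma(XW_i))$ has a unique solution $Z_i\in\mathbb{R}^{N\times m}$, and $$\|Z_a-Z_b\|\le\frac{\|X\|_F}{1-\gamma_0}\left[\frac{\gamma_0}{1-\gamma_0}\frac{\lambda_1}{\lambda_2}\|A_a-A_b\|+\|W_a-W_b\|\right].$$
   Context: $\sigma(u)=\max\{0,u\}$ applied entrywise. $\|\cdot\|$ is the spectral norm and $\|\cdot\|_F$ the Frobenius norm. *)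

theory Defs
  imports "HOL-Analysis.Analysis"
begin

definition spec_norm :: "real^'n^'m \<Rightarrow> real" where
  "spec_norm A = onorm (\<lambda>x. A *v x)"

definition frob_norm :: "real^'n^'m \<Rightarrow> real" where
  "frob_norm A = sqrt (\<Sum>i\<in>UNIV. \<Sum>j\<in>UNIV. (A $ i $ j)\<^sup>2)"

definition relu :: "real^'n^'m \<Rightarrow> real^'n^'m" where
  "relu A = (\<chi> i j. max 0 (A $ i $ j))"

end

theory Submission
  imports Defs
begin

lemma spec_bound: "norm ((A::real^'n^'m) *v x) \<le> spec_norm A * norm x"
  unfolding spec_norm_def
  using onorm[OF matrix_vector_mul_bounded_linear[of A]] by simp

lemma spec_nonneg: "0 \<le> spec_norm (A::real^'n^'m)"
  unfolding spec_norm_def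
  using onorm_pos_le[OF matrix_vector_mul_bounded_linear[of A]] by simp

lemma vmul_bound: "norm ((x::real^'m) v* (A::real^'n^'m)) \<le> spec_norm A * norm x"
proof -
  let ?y = "x v* A"
  have "norm ?y ^ 2 = inner ?y ?y" by (simp add: power2_norm_eq_inner)
  also have "\<dots> = inner x (A *v ?y)" by (rule dot_lmul_matrix)
  also have "\<dots> \<le> norm x * norm (A *v ?y)" by (rule norm_cauchy_schwarz)
  also have "\<dots> \<le> norm x * (spec_norm A * norm ?y)"
    by (rule mult_left_mono[OF spec_bound]) simp
  finally have h: "norm ?y * norm ?y \<le> (spec_norm A * norm x) * norm ?y"
    by (simp add: power2_eq_square algebra_simps)
  show ?thesis
  proof (cases "norm ?y = 0")
    case True then show ?thesis using spec_nonneg[of A] by simp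
  next
    case False then have "norm ?y > 0" by simp
    with h show ?thesis by simp
  qed
qed

lemma mm_row: "((Z::real^'k^'n) ** (A::real^'m^'k)) $ i = Z $ i v* A"
  by (simp add: matrix_matrix_mult_def vector_matrix_mult_def vec_eq_iff)

lemma mm_bound: "norm ((Z::real^'k^'n) ** (A::real^'m^'k)) \<le> spec_norm A * norm Z"
proof -
  have "norm (Z ** A) \<le> norm (spec_norm A *\<^sub>R Z)"
  proof (rule norm_le_componentwise_cart)
    fix i
    show "norm ((Z ** A) $ i) \<le> norm ((spec_norm A *\<^sub>R Z) $ i)"
      using vmul_bound[of "Z$i" A] spec_nonneg[of A] by (simp add: mm_row)
  qed
  then show ?thesis using spec_nonneg[of A] by simp
qed

lemma mm_diff_r: "((Z::real^'k^'n) - Z') ** (A::real^'m^'k) = Z ** A - Z' ** A"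
  by (simp add: matrix_matrix_mult_def vec_eq_iff sum_subtractf algebra_simps)

lemma mm_diff_l: "(Z::real^'k^'n) ** ((A::real^'m^'k) - A') = Z ** A - Z ** A'"
  by (simp add: matrix_matrix_mult_def vec_eq_iff sum_subtractf algebra_simps)

lemma relu_lip: "norm (relu (U::real^'m^'n) - relu V) \<le> norm (U - V)"
proof (rule norm_le_componentwise_cart)
  fix i
  show "norm ((relu U - relu V) $ i) \<le> norm ((U - V) $ i)"
  proof (rule norm_le_componentwise_cart)
    fix j
    show "norm ((relu U - relu V) $ i $ j) \<le> norm ((U - V) $ i $ j)"
      by (simp add: relu_def)
  qed
qed

lemma relu_norm: "norm (relu (U::real^'m^'n)) \<le> norm U"
proof -
  have "relu (0::real^'m^'n) = 0" by (simp add: relu_def vec_eq_iff)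
  then show ?thesis using relu_lip[of U 0] by simp
qed

lemma frob_eq: "frob_norm (X::real^'m^'n) = norm X"
  unfolding frob_norm_def norm_vec_def L2_set_def
  by (simp add: real_norm_def sum_nonneg)

lemma spec_le_norm: "spec_norm (D::real^'m^'n) \<le> norm D"
  unfolding spec_norm_def
proof (rule onorm_le)
  fix x
  let ?v = "(\<chi> i. norm (D $ i)) :: real^'n"
  have nv: "norm ?v = norm D" unfolding norm_vec_def by simp
  have "norm (D *v x) \<le> norm (norm x *\<^sub>R ?v)"
  proof (rule norm_le_componentwise_cart)
    fix i
    show "norm ((D *v x) $ i) \<le> norm ((norm x *\<^sub>R ?v) $ i)"
      using Cauchy_Schwarz_ineq2[of "D$i" x]
      by (simp add: matrix_mult_dot mult.commute)
  qed
  then show "norm (D *v x) \<le> norm D * norm x" using nv by (simp add: mult.commute)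
qed

theorem lemma4:
  fixes X :: "real^'d^'N"
    and Wa Wb :: "real^'m^'d"
    and Aa Ab :: "real^'m^'m"
    and gam lam1 lam2 gam0 :: real
  assumes "lam1 = max (spec_norm Wa) (spec_norm Wb)"
    and "lam2 = max (spec_norm Aa) (spec_norm Ab)"
    and "lam2 > 0"
    and "gam > 0"
    and "gam0 = gam * lam2"
    and "gam0 < 1"
  shows "(\<exists>!Z::real^'m^'N. Z = relu (gam *\<^sub>R (Z ** Aa) + relu (X ** Wa)))
       \<and> (\<exists>!Z::real^'m^'N. Z = relu (gam *\<^sub>R (Z ** Ab) + relu (X ** Wb)))
       \<and> (\<forall>Za Zb :: real^'m^'N.
            Za = relu (gam *\<^sub>R (Za ** Aa) + relu (X ** Wa)) \<longrightarrow>
            Zb = relu (gam *\<^sub>R (Zb ** Ab) + relu (X ** Wb)) \<longrightarrow>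
            spec_norm (Za - Zb) \<le> frob_norm X / (1 - gam0) *
              (gam0 / (1 - gam0) * (lam1 / lam2) * spec_norm (Aa - Ab) + spec_norm (Wa - Wb)))"
proof -
  have ex: "\<exists>!Z::real^'m^'N. Z = relu (gam *\<^sub>R (Z ** A) + relu (X ** W))"
    if sA: "spec_norm A \<le> lam2" for A :: "real^'m^'m" and W :: "real^'m^'d"
  proof -
    let ?F = "\<lambda>Z::real^'m^'N. relu (gam *\<^sub>R (Z ** A) + relu (X ** W))"
    have "\<exists>!Z. ?F Z = Z"
    proof (rule banach_fix_type[where c = gam0])
      show "0 \<le> gam0" using assms by simp
      show "gam0 < 1" using assms by simp
      show "\<forall>x y. dist (?F x) (?F y) \<le> gam0 * dist x y"
      proof (intro allI)
        fix x y :: "real^'m^'N"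
        have "dist (?F x) (?F y) \<le> norm (gam *\<^sub>R (x ** A) - gam *\<^sub>R (y ** A))"
          unfolding dist_norm using relu_lip[of "gam *\<^sub>R (x ** A) + relu (X ** W)" "gam *\<^sub>R (y ** A) + relu (X ** W)"]
          by simp
        also have "\<dots> = gam * norm ((x - y) ** A)"
          using assms by (simp add: mm_diff_r flip: scaleR_diff_right)
        also have "\<dots> \<le> gam * (spec_norm A * norm (x - y))"
          using mm_bound assms by (simp)
        also have "\<dots> \<le> gam * (lam2 * norm (x - y))"
          using sA assms by (simp add: mult_right_mono)
        finally show "dist (?F x) (?F y) \<le> gam0 * dist x y"
          using assms by (simp add: dist_norm mult.assoc)
      qed
    qed
    then show ?thesis by metis
  qed
  have e1: "\<exists>!Z::real^'m^'N. Z = relu (gam *\<^sub>R (Z ** Aa) + relu (X ** Wa))"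
    using ex assms by simp
  have e2: "\<exists>!Z::real^'m^'N. Z = relu (gam *\<^sub>R (Z ** Ab) + relu (X ** Wb))"
    using ex assms by simp
  have bnd: "\<forall>Za Zb :: real^'m^'N.
            Za = relu (gam *\<^sub>R (Za ** Aa) + relu (X ** Wa)) \<longrightarrow>
            Zb = relu (gam *\<^sub>R (Zb ** Ab) + relu (X ** Wb)) \<longrightarrow>
            spec_norm (Za - Zb) \<le> frob_norm X / (1 - gam0) *
              (gam0 / (1 - gam0) * (lam1 / lam2) * spec_norm (Aa - Ab) + spec_norm (Wa - Wb))"
  proof (intro allI impI)
    fix Za Zb :: "real^'m^'N"
    assume ha: "Za = relu (gam *\<^sub>R (Za ** Aa) + relu (X ** Wa))"
      and hb: "Zb = relu (gam *\<^sub>R (Zb ** Ab) + relu (X ** Wb))"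
    define nX where "nX = norm X"
    define B where "B = norm Zb"
    define d where "d = norm (Za - Zb)"
    define sA where "sA = spec_norm (Aa - Ab)"
    define sW where "sW = spec_norm (Wa - Wb)"
    have g1: "1 - gam0 > 0" using assms by simp
    have sAa: "spec_norm Aa \<le> lam2" and sAb: "spec_norm Ab \<le> lam2"
      and sWb: "spec_norm Wb \<le> lam1" using assms by auto
    have "B \<le> norm (gam *\<^sub>R (Zb ** Ab) + relu (X ** Wb))"
      unfolding B_def by (subst hb) (rule relu_norm)
    also have "\<dots> \<le> gam * norm (Zb ** Ab) + norm (relu (X ** Wb))"
      using norm_triangle_ineq assms by (simp add: order_trans[OF norm_triangle_ineq])
    also have "\<dots> \<le> gam * (lam2 * B) + lam1 * nX"
    proof (rule add_mono)
      show "gam * norm (Zb ** Ab) \<le> gam * (lam2 * B)"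
      proof -
        have "norm (Zb ** Ab) \<le> spec_norm Ab * B" using mm_bound[of Zb Ab] unfolding B_def .
        also have "\<dots> \<le> lam2 * B" using sAb unfolding B_def by (simp add: mult_right_mono)
        finally show ?thesis using assms by simp
      qed
      show "norm (relu (X ** Wb)) \<le> lam1 * nX"
        using relu_norm[of "X ** Wb"] mm_bound[of X Wb] sWb unfolding nX_def
        by (meson norm_ge_zero mult_right_mono order_trans)
    qed
    finally have hB: "B * (1 - gam0) \<le> lam1 * nX" using assms by (simp add: algebra_simps)
    have "d \<le> norm ((gam *\<^sub>R (Za ** Aa) + relu (X ** Wa)) - (gam *\<^sub>R (Zb ** Ab) + relu (X ** Wb)))"
      unfolding d_def by (subst ha, subst hb) (rule relu_lip)
    also have "\<dots> \<le> gam * norm (Za ** Aa - Zb ** Ab) + norm (relu (X ** Wa) - relu (X ** Wb))"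
    proof -
      have eq: "(gam *\<^sub>R (Za ** Aa) + relu (X ** Wa)) - (gam *\<^sub>R (Zb ** Ab) + relu (X ** Wb))
          = gam *\<^sub>R (Za ** Aa - Zb ** Ab) + (relu (X ** Wa) - relu (X ** Wb))"
        by (simp add: algebra_simps)
      show ?thesis unfolding eq using assms
        by (metis (no_types, lifting) norm_scaleR norm_triangle_ineq abs_of_pos)
    qed
    also have "\<dots> \<le> gam * (lam2 * d + sA * B) + sW * nX"
    proof (rule add_mono)
      have "Za ** Aa - Zb ** Ab = (Za - Zb) ** Aa + Zb ** (Aa - Ab)"
        by (simp add: mm_diff_r mm_diff_l)
      then have "norm (Za ** Aa - Zb ** Ab) \<le> norm ((Za - Zb) ** Aa) + norm (Zb ** (Aa - Ab))"
        by (simp add: norm_triangle_ineq)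
      also have "\<dots> \<le> lam2 * d + sA * B"
        using mm_bound[of "Za - Zb" Aa] mm_bound[of Zb "Aa - Ab"] sAa unfolding d_def sA_def B_def
        by (meson add_mono norm_ge_zero mult_right_mono order_trans)
      finally show "gam * norm (Za ** Aa - Zb ** Ab) \<le> gam * (lam2 * d + sA * B)"
        using assms by simp
      have "norm (relu (X ** Wa) - relu (X ** Wb)) \<le> norm (X ** Wa - X ** Wb)" by (rule relu_lip)
      also have "\<dots> \<le> sW * nX" unfolding sW_def nX_def by (simp add: mm_diff_l[symmetric] mm_bound)
      finally show "norm (relu (X ** Wa) - relu (X ** Wb)) \<le> sW * nX" .
    qed
    finally have hd: "d * (1 - gam0) \<le> gam * sA * B + sW * nX" using assms by (simp add: algebra_simps)
    have sA0: "sA \<ge> 0" unfolding sA_def by (rule spec_nonneg)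
    have B1: "B \<le> lam1 * nX / (1 - gam0)" using hB g1 by (simp add: field_simps)
    have "gam * sA * B \<le> gam * sA * (lam1 * nX / (1 - gam0))"
      using mult_left_mono[OF B1, of "gam * sA"] sA0 assms by simp
    then have "d * (1 - gam0) \<le> gam * sA * (lam1 * nX / (1 - gam0)) + sW * nX" using hd by simp
    then have "d \<le> (gam * sA * (lam1 * nX / (1 - gam0)) + sW * nX) / (1 - gam0)"
      using g1 by (simp add: pos_le_divide_eq)
    also have "\<dots> = nX / (1 - gam0) * (gam0 / (1 - gam0) * (lam1 / lam2) * sA + sW)"
      using assms g1 by (simp add: field_simps)
    finally have "d \<le> nX / (1 - gam0) * (gam0 / (1 - gam0) * (lam1 / lam2) * sA + sW)" .
    then show "spec_norm (Za - Zb) \<le> frob_norm X / (1 - gam0) *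
              (gam0 / (1 - gam0) * (lam1 / lam2) * spec_norm (Aa - Ab) + spec_norm (Wa - Wb))"
      using spec_le_norm[of "Za - Zb"] unfolding d_def nX_def sA_def sW_def frob_eq by simp
  qed
  show ?thesis using e1 e2 bnd by blast
qed

end
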